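(* Let $N=\{1,\ldots,n\}$, let $v$ be a vertex of $\mathscr{BG}_+(n)$, and let $\mathscr{D}=\{S: \varnothing\neq S\subsetneq N,\ v(S)=1\}$ be its associated collection. If $\mathscr{D}\neq\varnothing$, then \[ C(v)=\mathrm{conv}\{\mathbf{1}^{\{i\}}: i\in\textstyle\bigcap\mathscr{D}\}, \] so that the dimension of the core of $v$ is $|\bigcap\mathscr{D}|-1$. If $\mathscr{D}=\varnothing$, then $v=u_N$, whose core is the simplex $\{x\in\mathbb{R}^N_+:\sum_{i\in N}x_i=1\}$.
   Context: A game on $N$ is a map $v:2^N\to\mathbb{R}$ with $v(\varnothing)=0$. $u_N$ is the game with $u_N(N)=1$ and $u_N(S)=0$ for $S\neq N$. $\mathbf{1}^{\{i\}}\in\mathbb{R}^N$ is the $i$-th unit vector. The core is $C(v)=\{x\in\mathbb{R}^N: \sum_{i\in S}x_i\geqslant v(S)\ \forall S,\ \sum_{i\in N}x_i=v(N)\}$. $\mathscr{BG}_+(n)$ is the polytope (in $\mathbb{R}^{2^N\setminus\{\varnothing,N\}}$) of games $v$ with $v\geqslant 0$, $v(N)=1$ and $C(v)\neq\varnothing$. *)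

theory Defs
  imports "HOL-Analysis.Analysis"
begin

text \<open>Player set N is the finite type 'n (N = UNIV). A game is v :: 'n set => real
  with v {} = 0. Payoff vectors live in real^'n.\<close>

definition is_game :: "('n set \<Rightarrow> real) \<Rightarrow> bool" where
  "is_game v \<longleftrightarrow> v {} = 0"

definition unanimity_N :: "'n::finite set \<Rightarrow> real" where
  "unanimity_N S = (if S = UNIV then 1 else 0)"

definition core :: "('n::finite set \<Rightarrow> real) \<Rightarrow> (real ^ 'n) set" where
  "core v = {x. (\<forall>S. (\<Sum>i\<in>S. x $ i) \<ge> v S) \<and> (\<Sum>i\<in>UNIV. x $ i) = v UNIV}"

text \<open>BG_+(n): games v \<ge> 0 with v(N) = 1 and nonempty core. The coordinates of the
  polytope are the proper nonempty coalitions; v {} = 0 and v N = 1 are fixed.\<close>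
definition BGplus :: "('n::finite set \<Rightarrow> real) set" where
  "BGplus = {v. is_game v \<and> (\<forall>S. v S \<ge> 0) \<and> v UNIV = 1 \<and> core v \<noteq> {}}"

text \<open>Vertex = extreme point of the polytope. Since all members agree on {} and N,
  this is the extreme-point notion in the coordinates indexed by proper nonempty coalitions.\<close>
definition vertex_BGplus :: "('n::finite set \<Rightarrow> real) \<Rightarrow> bool" where
  "vertex_BGplus v \<longleftrightarrow> v \<in> BGplus \<and>
     (\<forall>a\<in>BGplus. \<forall>b\<in>BGplus. \<forall>t::real. 0 < t \<and> t < 1 \<and>
        v = (\<lambda>S. (1 - t) * a S + t * b S) \<longrightarrow> a = b)"

definition assoc_coll :: "('n::finite set \<Rightarrow> real) \<Rightarrow> 'n set set" where
  "assoc_coll v = {S. S \<noteq> {} \<and> S \<noteq> UNIV \<and> v S = 1}"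

end

theory Submission
  imports Defs
begin

lemma core_facts:
  assumes "v \<in> BGplus" "x \<in> core v"
  shows "(\<forall>j. 0 \<le> x $ j) \<and> (\<Sum>j\<in>UNIV. x $ j) = 1 \<and> (\<forall>S. v S \<le> (\<Sum>j\<in>S. x $ j))"
proof -
  have c: "\<forall>S. (\<Sum>i\<in>S. x $ i) \<ge> v S" "(\<Sum>i\<in>UNIV. x $ i) = v UNIV"
    using assms(2) unfolding core_def by auto
  have "0 \<le> x $ j" for j
  proof -
    have "0 \<le> v {j}" using assms(1) unfolding BGplus_def by auto
    then show ?thesis using c(1)[rule_format, of "{j}"] by simp
  qed
  then show ?thesis using c assms(1) unfolding BGplus_def by auto
qed

lemma v_le_1:
  assumes "v \<in> BGplus" shows "v S \<le> 1"
proof -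
  obtain x where x: "x \<in> core v" using assms unfolding BGplus_def by auto
  note f = core_facts[OF assms x]
  have "(\<Sum>j\<in>S. x $ j) \<le> (\<Sum>j\<in>UNIV. x $ j)"
    by (rule sum_mono2) (use f in auto)
  then show ?thesis using f by (metis order_trans)
qed

lemma sum_axis: "(\<Sum>j\<in>S. axis i (1::real) $ j) = (if i \<in> S then 1 else 0)"
  by (simp add: axis_def sum.delta' [of S i "\<lambda>_. 1::real", simplified] cong: if_cong)

lemma box_in_BG:
  fixes v :: "'n::finite set \<Rightarrow> real"
  assumes "v {} = 0" "\<forall>S. 0 \<le> v S" "v UNIV = 1" "\<forall>S. v S \<le> 1" "\<forall>S. i \<notin> S \<longrightarrow> v S = 0"
  shows "v \<in> BGplus"
proof -
  have "axis i 1 \<in> core v"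
    unfolding core_def using assms by (auto simp: sum_axis)
  then show ?thesis using assms unfolding BGplus_def is_game_def by auto
qed

lemma vertex_use:
  assumes "vertex_BGplus v" "a \<in> BGplus" "b \<in> BGplus" "0 < t" "t < 1"
    "v = (\<lambda>S. (1 - t) * a S + t * b S)"
  shows "a = b"
  using assms unfolding vertex_BGplus_def by blast

lemma step1:
  fixes v :: "'n::finite set \<Rightarrow> real"
  assumes vx: "vertex_BGplus v" and x: "x \<in> core v" and xi: "x $ i > 0"
  shows "\<forall>S. v S > 0 \<longrightarrow> i \<in> S"
proof -
  have vB: "v \<in> BGplus" using vx unfolding vertex_BGplus_def by auto
  note f = core_facts[OF vB x]
  have v0: "v {} = 0" and vnn: "\<forall>S. 0 \<le> v S" and vU: "v UNIV = 1"
    using vB unfolding BGplus_def is_game_def by auto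
  have ins: "i \<notin> S \<Longrightarrow> x $ i + (\<Sum>j\<in>S. x $ j) \<le> 1" for S
  proof -
    assume "i \<notin> S"
    then have "x $ i + (\<Sum>j\<in>S. x $ j) = (\<Sum>j\<in>insert i S. x $ j)" by simp
    also have "\<dots> \<le> (\<Sum>j\<in>UNIV. x $ j)" by (rule sum_mono2) (use f in auto)
    finally show ?thesis using f by simp
  qed
  have xiS: "i \<in> S \<Longrightarrow> x $ i \<le> (\<Sum>j\<in>S. x $ j)" for S
    by (rule member_le_sum) (use f in auto)
  have xi1: "x $ i \<le> 1" using ins[of "{}"] by simp
  show ?thesis
  proof (cases "x $ i = 1")
    case True
    show ?thesis
    proof (intro allI impI, rule ccontr)
      fix S assume "0 < v S" "i \<notin> S"
      then show False using ins[of S] True f by (smt (verit))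
    qed
  next
    case False
    with xi1 have xl: "x $ i < 1" by simp
    define xs where "xs S = (\<Sum>j\<in>S. x $ j)" for S
    define w where "w S = (if i \<in> S then v S / xs S else 0)" for S
    define u where "u S = (v S - x $ i * w S) / (1 - x $ i)" for S
    define y :: "real ^ 'n" where "y = (\<chi> j. if j = i then 0 else x $ j / (1 - x $ i))"
    have xsp: "i \<in> S \<Longrightarrow> xs S > 0" for S using xiS[of S] xi unfolding xs_def by simp
    have vxs: "v S \<le> xs S" for S using f unfolding xs_def by auto
    have xsU: "xs UNIV = 1" using f unfolding xs_def by simp
    have sumy: "(\<Sum>j\<in>S. y $ j) = (xs S - (if i \<in> S then x $ i else 0)) / (1 - x $ i)" for S
    proof (cases "i \<in> S")
      case True
      have "(\<Sum>j\<in>S. y $ j) = y $ i + (\<Sum>j\<in>S - {i}. y $ j)"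
        by (rule sum.remove) (use True in auto)
      also have "\<dots> = (\<Sum>j\<in>S - {i}. x $ j / (1 - x $ i))"
        unfolding y_def by simp
      also have "\<dots> = (\<Sum>j\<in>S - {i}. x $ j) / (1 - x $ i)" by (simp add: sum_divide_distrib)
      also have "(\<Sum>j\<in>S - {i}. x $ j) = xs S - x $ i"
        unfolding xs_def using sum.remove[of S i "\<lambda>j. x $ j"] True by simp
      finally show ?thesis using True by simp
    next
      case False
      have "(\<Sum>j\<in>S. y $ j) = (\<Sum>j\<in>S. x $ j / (1 - x $ i))"
        unfolding y_def using False by (intro sum.cong) auto
      then show ?thesis using False unfolding xs_def by (simp add: sum_divide_distrib)
    qed
    have w1: "w S \<le> 1" for S
      using vxs[of S] xsp[of S] unfolding w_def by (auto simp: divide_le_eq_1)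
    have wnn: "0 \<le> w S" for S using vnn xsp[of S] unfolding w_def by auto
    have wB: "w \<in> BGplus"
      by (rule box_in_BG[where i=i]) (use w1 wnn v0 vU xsU in \<open>auto simp: w_def\<close>)
    have key: "x $ i * w S \<le> v S" for S
    proof (cases "i \<in> S")
      case True
      have "x $ i * v S \<le> xs S * v S"
        using xiS[of S] True vnn unfolding xs_def by (intro mult_right_mono) auto
      then show ?thesis using True xsp[of S] unfolding w_def by (simp add: field_simps)
    next
      case False then show ?thesis using vnn unfolding w_def by auto
    qed
    have uB: "u \<in> BGplus" unfolding BGplus_def is_game_def
    proof (intro CollectI conjI allI)
      show "u {} = 0" using v0 unfolding u_def w_def by simp
      show "0 \<le> u S" for S using key[of S] xl unfolding u_def by simp
      show "u UNIV = 1" using vU xsU xl unfolding u_def w_def by simp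
      have "y \<in> core u" unfolding core_def
      proof (intro CollectI conjI allI)
        fix S
        have "v S - x $ i * w S \<le> xs S - (if i \<in> S then x $ i else 0)"
        proof (cases "i \<in> S")
          case True
          have "0 \<le> (xs S - v S) * (xs S - x $ i)"
            using vxs[of S] xiS[of S] True unfolding xs_def by simp
          then show ?thesis using True xsp[of S] unfolding w_def
            by (simp add: field_simps)
        next
          case False then show ?thesis using vxs[of S] unfolding w_def by simp
        qed
        then show "u S \<le> (\<Sum>j\<in>S. y $ j)" unfolding sumy u_def using xl
          by (intro divide_right_mono) auto
      next
        show "(\<Sum>j\<in>UNIV. y $ j) = u UNIV" unfolding sumy u_def w_def using xsU vU by simp
      qed
      then show "core u \<noteq> {}" by auto
    qed
    have veq: "v = (\<lambda>S. (1 - x $ i) * u S + x $ i * w S)"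
      using xl unfolding u_def by (auto simp: field_simps)
    have "u = w" by (rule vertex_use[OF vx uB wB xi xl veq])
    then have "v = w" using veq by (auto simp: algebra_simps)
    then show ?thesis unfolding w_def by (metis less_irrefl)
  qed
qed

lemma exists_i:
  fixes v :: "'n::finite set \<Rightarrow> real"
  assumes vx: "vertex_BGplus v"
  shows "\<exists>i. \<forall>S. v S > 0 \<longrightarrow> i \<in> S"
proof -
  have vB: "v \<in> BGplus" using vx unfolding vertex_BGplus_def by auto
  obtain x where x: "x \<in> core v" using vB unfolding BGplus_def by auto
  note f = core_facts[OF vB x]
  have "\<exists>i. x $ i > 0"
  proof (rule ccontr)
    assume "\<not> ?thesis"
    then have "x $ j = 0" for j using f[THEN conjunct1, rule_format, of j] by (metis not_less order.antisym)
    then show False using f by simp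
  qed
  then show ?thesis using step1[OF vx x] by blast
qed

lemma zero_one:
  fixes v :: "'n::finite set \<Rightarrow> real"
  assumes vx: "vertex_BGplus v"
  shows "v S = 0 \<or> v S = 1"
proof (rule ccontr)
  assume na: "\<not> (v S = 0 \<or> v S = 1)"
  have vB: "v \<in> BGplus" using vx unfolding vertex_BGplus_def by auto
  have v0: "v {} = 0" and vnn: "\<forall>S. 0 \<le> v S" and vU: "v UNIV = 1"
    using vB unfolding BGplus_def is_game_def by auto
  have v1: "\<forall>T. v T \<le> 1" using v_le_1[OF vB] by auto
  obtain i where i: "\<forall>S. v S > 0 \<longrightarrow> i \<in> S" using exists_i[OF vx] by blast
  have p: "0 < v S" "v S < 1" using na vnn v1 by (auto simp: less_le)
  have SE: "S \<noteq> {}" "S \<noteq> UNIV" using na v0 vU by auto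
  have iS: "i \<in> S" using i p by auto
  define e where "e = min (v S) (1 - v S)"
  have e: "0 < e" "e \<le> v S" "e \<le> 1 - v S" using p unfolding e_def by auto
  define a where "a = v(S := v S - e)"
  define b where "b = v(S := v S + e)"
  have z: "\<forall>T. i \<notin> T \<longrightarrow> v T = 0"
  proof (intro allI impI)
    fix T assume "i \<notin> T"
    then have "\<not> 0 < v T" using i by blast
    then show "v T = 0" using vnn[rule_format, of T] by simp
  qed
  have aB: "a \<in> BGplus"
    by (rule box_in_BG[where i=i]) (use SE e v0 vU vnn v1 z iS in \<open>auto simp: a_def\<close>)
  have bB: "b \<in> BGplus"
    by (rule box_in_BG[where i=i]) (use SE e v0 vU vnn v1 z iS in \<open>auto simp: b_def\<close>)
  have vh: "v = (\<lambda>T. (1 - 1/2) * a T + (1/2) * b T)"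
    unfolding a_def b_def by (rule ext) (simp add: field_simps)
  have "a = b" by (rule vertex_use[OF vx aB bB _ _ vh]) auto
  then have "a S = b S" by simp
  then show False using e unfolding a_def b_def by simp
qed

theorem proposition2:
  fixes v :: "'n::finite set \<Rightarrow> real"
  assumes "vertex_BGplus v"
  shows "(assoc_coll v \<noteq> {} \<longrightarrow>
            core v = convex hull {axis i 1 | i. i \<in> \<Inter> (assoc_coll v)} \<and>
            aff_dim (core v) = int (card (\<Inter> (assoc_coll v))) - 1)
       \<and> (assoc_coll v = {} \<longrightarrow>
            v = unanimity_N \<and>
            core v = {x. (\<forall>i. x $ i \<ge> 0) \<and> (\<Sum>i\<in>UNIV. x $ i) = 1})"
proof -
  have vB: "v \<in> BGplus" using assms unfolding vertex_BGplus_def by auto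
  have v0: "v {} = 0" and vnn: "\<forall>S. 0 \<le> v S" and vU: "v UNIV = 1"
    using vB unfolding BGplus_def is_game_def by auto
  have v1: "\<forall>T. v T \<le> 1" using v_le_1[OF vB] by auto
  have zo: "\<And>S. v S = 0 \<or> v S = 1" using zero_one[OF assms] by blast
  define D where "D = assoc_coll v"
  define I where "I = \<Inter> D"
  have cvx: "convex (core v)"
    unfolding convex_def core_def
  proof (intro ballI allI impI CollectI conjI)
    fix x y :: "real ^ 'n" and a b :: real and S
    assume x: "x \<in> {x. (\<forall>S. v S \<le> (\<Sum>i\<in>S. x $ i)) \<and> (\<Sum>i\<in>UNIV. x $ i) = v UNIV}"
      and y: "y \<in> {x. (\<forall>S. v S \<le> (\<Sum>i\<in>S. x $ i)) \<and> (\<Sum>i\<in>UNIV. x $ i) = v UNIV}"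
      and ab: "0 \<le> a" "0 \<le> b" "a + b = 1"
    have e: "(\<Sum>i\<in>T. (a *\<^sub>R x + b *\<^sub>R y) $ i) = a * (\<Sum>i\<in>T. x $ i) + b * (\<Sum>i\<in>T. y $ i)" for T
      by (simp add: sum.distrib sum_distrib_left)
    have "a * v S + b * v S \<le> a * (\<Sum>i\<in>S. x $ i) + b * (\<Sum>i\<in>S. y $ i)"
      using x y ab by (intro add_mono mult_left_mono) auto
    moreover have "a * v S + b * v S = v S"
      using ab(3) by (metis distrib_right mult_1)
    ultimately show "v S \<le> (\<Sum>i\<in>S. (a *\<^sub>R x + b *\<^sub>R y) $ i)"
      unfolding e by simp
    have "a * v UNIV + b * v UNIV = v UNIV"
      using ab(3) by (metis distrib_right mult_1)
    then show "(\<Sum>i\<in>UNIV. (a *\<^sub>R x + b *\<^sub>R y) $ i) = v UNIV"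
      unfolding e using x y by simp
  qed
  have part1: "D \<noteq> {} \<Longrightarrow> core v = convex hull {axis i 1 | i. i \<in> I} \<and>
            aff_dim (core v) = int (card I) - 1"
  proof -
    assume Dne: "D \<noteq> {}"
    have axin: "axis j 1 \<in> core v" if j: "j \<in> I" for j
      unfolding core_def
    proof (intro CollectI conjI allI)
      fix S
      show "v S \<le> (\<Sum>i\<in>S. axis j 1 $ i)"
      proof (cases "j \<in> S")
        case True then show ?thesis using v1 by (simp add: sum_axis)
      next
        case False
        have "v S \<noteq> 1"
        proof
          assume "v S = 1"
          then have "S \<in> D" unfolding D_def assoc_coll_def using v0 False by auto
          then show False using j False unfolding I_def by auto
        qed
        then show ?thesis using zo[of S] False by (simp add: sum_axis)
      qed
      show "(\<Sum>i\<in>UNIV. axis j (1::real) $ i) = v UNIV" using vU by (simp add: sum_axis)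
    qed
    have sub1: "convex hull {axis i 1 | i. i \<in> I} \<subseteq> core v"
      by (rule hull_minimal) (use axin cvx in auto)
    have sub2: "core v \<subseteq> convex hull {axis i 1 | i. i \<in> I}"
    proof
      fix x assume x: "x \<in> core v"
      note f = core_facts[OF vB x]
      have x0: "x $ j = 0" if "j \<notin> I" for j
      proof -
        obtain S where S: "S \<in> D" "j \<notin> S" using \<open>j \<notin> I\<close> unfolding I_def by auto
        have vS: "v S = 1" using S unfolding D_def assoc_coll_def by auto
        have "x $ j + (\<Sum>i\<in>S. x $ i) = (\<Sum>i\<in>insert j S. x $ i)" using S by simp
        also have "\<dots> \<le> (\<Sum>i\<in>UNIV. x $ i)" by (rule sum_mono2) (use f in auto)
        finally show ?thesis using f vS by (smt (verit))
      qed
      have xe: "x = (\<Sum>j\<in>I. x $ j *\<^sub>R axis j 1)"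
      proof (rule vec_eq_iff[THEN iffD2], rule allI)
        fix k
        have "(\<Sum>j\<in>I. x $ j *\<^sub>R axis j (1::real)) $ k = (\<Sum>j\<in>I. x $ j * (if k = j then 1 else 0))"
          by (simp add: axis_def)
        also have "\<dots> = (\<Sum>j\<in>I. if k = j then x $ k else 0)" by (intro sum.cong) auto
        also have "\<dots> = (if k \<in> I then x $ k else 0)" by (simp add: sum.delta)
        also have "\<dots> = x $ k" using x0[of k] by auto
        finally show "x $ k = (\<Sum>j\<in>I. x $ j *\<^sub>R axis j 1) $ k" by simp
      qed
      have sI: "(\<Sum>j\<in>I. x $ j) = 1"
      proof -
        have "(\<Sum>j\<in>UNIV. x $ j) = (\<Sum>j\<in>I. x $ j)"
          by (rule sum.mono_neutral_right) (use x0 in auto)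
        then show ?thesis using f by simp
      qed
      show "x \<in> convex hull {axis i 1 | i. i \<in> I}"
      proof (subst xe)
        show "(\<Sum>j\<in>I. x $ j *\<^sub>R axis j 1) \<in> convex hull {axis i 1 | i. i \<in> I}"
          by (rule convex_sum) (use sI f in \<open>auto intro: hull_inc\<close>)
      qed
    qed
    have ceq: "core v = convex hull {axis i 1 | i. i \<in> I}" by (rule equalityI[OF sub2 sub1])
    have img: "{axis i (1::real) | i. i \<in> I} = (\<lambda>i. axis i 1) ` I" by blast
    have inj: "inj_on (\<lambda>i. axis i (1::real)) I" by (auto simp: inj_on_def axis_eq_axis)
    have "independent {axis i (1::real) | i. i \<in> I}"
      by (rule independent_mono[OF independent_Basis]) auto
    then have nad: "\<not> affine_dependent {axis i (1::real) | i. i \<in> I}"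
      using affine_dependent_imp_dependent by blast
    have "aff_dim (core v) = aff_dim {axis i (1::real) | i. i \<in> I}"
      unfolding ceq by (rule aff_dim_convex_hull)
    also have "\<dots> = int (card {axis i (1::real) | i. i \<in> I}) - 1"
      using aff_dim_affine_independent[OF nad] by linarith
    also have "card {axis i (1::real) | i. i \<in> I} = card I"
      unfolding img by (rule card_image[OF inj])
    finally show ?thesis using ceq by simp
  qed
  have part2: "D = {} \<Longrightarrow> v = unanimity_N \<and>
            core v = {x. (\<forall>i. x $ i \<ge> 0) \<and> (\<Sum>i\<in>UNIV. x $ i) = 1}"
  proof -
    assume D: "D = {}"
    have vu: "v = unanimity_N"
    proof
      fix S
      show "v S = unanimity_N S"
      proof (cases "S = UNIV")
        case True then show ?thesis using vU by (simp add: unanimity_N_def)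
      next
        case False
        have "v S \<noteq> 1"
        proof
          assume "v S = 1"
          then have "S \<in> D" unfolding D_def assoc_coll_def using v0 False by auto
          then show False using D by auto
        qed
        then show ?thesis using zo[of S] False by (simp add: unanimity_N_def)
      qed
    qed
    have "core v = {x. (\<forall>i. x $ i \<ge> 0) \<and> (\<Sum>i\<in>UNIV. x $ i) = 1}"
    proof (intro set_eqI iffI)
      fix x :: "real ^ 'n" assume "x \<in> core v"
      then show "x \<in> {x. (\<forall>i. x $ i \<ge> 0) \<and> (\<Sum>i\<in>UNIV. x $ i) = 1}"
        using core_facts[OF vB] by blast
    next
      fix x :: "real ^ 'n" assume x: "x \<in> {x. (\<forall>i. x $ i \<ge> 0) \<and> (\<Sum>i\<in>UNIV. x $ i) = 1}"
      show "x \<in> core v" unfolding core_def vu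
      proof (intro CollectI conjI allI)
        fix S show "unanimity_N S \<le> (\<Sum>i\<in>S. x $ i)"
          using x by (auto simp: unanimity_N_def intro: sum_nonneg)
        show "(\<Sum>i\<in>UNIV. x $ i) = unanimity_N UNIV" using x by (simp add: unanimity_N_def)
      qed
    qed
    with vu show ?thesis by blast
  qed
  show ?thesis using part1 part2 unfolding D_def I_def by blast
qed

end
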